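(* Let $\mathbb L$ be a set of infinite cardinality $\kappa$. Let $d\in\mathbb I$, let $n\ge1$, and for each $t=1,\dots,n$ let $S_t$ be a finite index set and $A^{st}\in\mathbb W$ ($s\in S_t$) sets with $|A^{st}|=\kappa_t$, where $\aleph_0\le\kappa_t<\kappa_u\le\kappa$ whenever $t<u$. Then there exists $i\in\mathbb I$ with $d\subseteq i$ such that $|A^{st}_i|<|A^{ru}_i|$ for all $t<u$, $s\in S_t$, $r\in S_u$.
   Context: A point over $\mathbb L$ is either an element of $\mathbb L$ or a finite tuple $(x_1,\dots,x_n)$, $n\ge1$, of points over $\mathbb L$ ($\mathbb L$ contains no tuples of points); $P$ is the set of all points; $supp(x)=\{x\}$ for $x\in\mathbb L$ and $supp(x_1,\dots,x_n)=\bigcup_k supp(x_k)$. $\mathbb W$ is the family of finitary point sets: $A\subseteq P$ such that $\{a\in A:supp(a)=i\}$ is finite for every finite $i\subseteq\mathbb L$. $\mathbb I=[\mathbb L]^{<\omega}$ is the set of finite subsets of $\mathbb L$, and $A_i=\{a\in A:supp(a)\subseteq i\}$ for $A\in\mathbb W$, $i\in\mathbb I$. *)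

theory Defs
  imports Main
begin

text \<open>Points over L, where L is modelled as the universe of the type 'a.
  A point is an atom of L or a tuple (list) of points; only non-empty tuples
  are points (predicate is_point).\<close>

datatype 'a pt = Atom 'a | Tup "'a pt list"

fun is_point :: "'a pt \<Rightarrow> bool" where
  "is_point (Atom x) = True"
| "is_point (Tup xs) = (xs \<noteq> [] \<and> (\<forall>y\<in>set xs. is_point y))"

definition Points :: "'a pt set" where
  "Points = {p. is_point p}"

fun supp :: "'a pt \<Rightarrow> 'a set" where
  "supp (Atom x) = {x}"
| "supp (Tup xs) = \<Union> (supp ` set xs)"

text \<open>Finitary point sets (the family W).\<close>
definition finitary :: "'a pt set \<Rightarrow> bool" where
  "finitary A \<longleftrightarrow> A \<subseteq> Points \<and> (\<forall>i. finite i \<longrightarrow> finite {a\<in>A. supp a = i})"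

definition restr :: "'a pt set \<Rightarrow> 'a set \<Rightarrow> 'a pt set" where
  "restr A i = {a\<in>A. supp a \<subseteq> i}"

end

theory Submission
  imports Defs "HOL-Algebra.Free_Abelian_Groups"
begin

lemma finite_supp: "finite (supp p)"
  by (induction p) auto

lemma finite_restr:
  assumes "finitary A" "finite i"
  shows "finite (restr A i)"
proof -
  have "restr A i \<subseteq> (\<Union>j\<in>Pow i. {a\<in>A. supp a = j})"
    unfolding restr_def by auto
  moreover have "finite (\<Union>j\<in>Pow i. {a\<in>A. supp a = j})"
  proof (intro finite_UN_I)
    show "finite (Pow i)" using assms by simp
    fix j assume "j \<in> Pow i"
    then have "finite j" using assms finite_subset by auto
    then show "finite {a\<in>A. supp a = j}" using assms unfolding finitary_def by blast
  qed
  ultimately show ?thesis by (rule finite_subset)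
qed

lemma fiber_exists:
  fixes K :: "'c set" and C :: "'a set" and X :: "'a pt set"
  assumes K: "infinite K" and CK: "(card_of C, card_of K) \<in> ordLeq"
    and KX: "(card_of K, card_of X) \<in> ordLess"
  shows "\<exists>F. finite F \<and> infinite {a\<in>X. supp a \<inter> C = F}"
proof (rule ccontr)
  assume H: "\<not> ?thesis"
  have XU: "X = (\<Union>F\<in>Fpow C. {a\<in>X. supp a \<inter> C = F})"
    using finite_supp by (auto simp: Fpow_def)
  have FK: "(card_of (Fpow C), card_of K) \<in> ordLeq"
  proof (cases "finite C")
    case True
    then have "finite (Fpow C)" by (simp add: Fpow_def)
    then show ?thesis using K finite_ordLess_infinite2 ordLess_imp_ordLeq by blast
  next
    case False
    then show ?thesis using card_of_Fpow_infinite CK ordIso_ordLeq_trans by blast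
  qed
  have "\<forall>F\<in>Fpow C. (card_of {a\<in>X. supp a \<inter> C = F}, card_of K) \<in> ordLeq"
  proof
    fix F assume "F \<in> Fpow C"
    then have "finite F" by (simp add: Fpow_def)
    then have "finite {a\<in>X. supp a \<inter> C = F}" using H by blast
    then show "(card_of {a\<in>X. supp a \<inter> C = F}, card_of K) \<in> ordLeq"
      using K finite_ordLess_infinite2 ordLess_imp_ordLeq by blast
  qed
  then have "(card_of (\<Union>F\<in>Fpow C. {a\<in>X. supp a \<inter> C = F}), card_of K) \<in> ordLeq"
    using card_of_UNION_ordLeq_infinite[OF K FK, of "\<lambda>F. {a\<in>X. supp a \<inter> C = F}"] by simp
  then have "(card_of X, card_of K) \<in> ordLeq" using XU by simp
  then show False using KX not_ordLess_ordLeq by blast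
qed

theorem mainTheorem8:
  fixes S :: "nat \<Rightarrow> 'b set"
    and A :: "nat \<Rightarrow> 'b \<Rightarrow> 'a pt set"
    and \<kappa> :: "nat \<Rightarrow> 'c rel"
    and d :: "'a set" and n :: nat
  assumes infL: "infinite (UNIV :: 'a set)"
    and d: "finite d"
    and n: "n \<ge> 1"
    and Sfin: "\<forall>t\<in>{1..n}. finite (S t)"
    and AW: "\<forall>t\<in>{1..n}. \<forall>s\<in>S t. finitary (A t s)"
    and Acard: "\<forall>t\<in>{1..n}. \<forall>s\<in>S t. (card_of (A t s), \<kappa> t) \<in> ordIso"
    and kCard: "\<forall>t\<in>{1..n}. Card_order (\<kappa> t)"
    and kinf: "\<forall>t\<in>{1..n}. (natLeq, \<kappa> t) \<in> ordLeq"
    and kmono: "\<forall>t\<in>{1..n}. \<forall>u\<in>{1..n}. t < u \<longrightarrow> (\<kappa> t, \<kappa> u) \<in> ordLess"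
    and kle: "\<forall>t\<in>{1..n}. (\<kappa> t, card_of (UNIV :: 'a set)) \<in> ordLeq"
  shows "\<exists>i. finite i \<and> d \<subseteq> i \<and>
    (\<forall>t\<in>{1..n}. \<forall>u\<in>{1..n}. t < u \<longrightarrow>
       (\<forall>s\<in>S t. \<forall>r\<in>S u. (card_of (restr (A t s) i), card_of (restr (A u r) i)) \<in> ordLess))"
proof -
  define C where "C u = (\<Union>t\<in>{1..<u}. \<Union>s\<in>S t. \<Union>a\<in>A t s. supp a)" for u
  have fib: "\<exists>F. finite F \<and> infinite {a\<in>A u r. supp a \<inter> C u = F}"
    if u: "u \<in> {2..n}" and r: "r \<in> S u" for u r
  proof -
    define K where "K = Field (\<kappa> (u-1))"
    have u1: "u - 1 \<in> {1..n}" using u by auto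
    have KI: "(card_of K, \<kappa> (u-1)) \<in> ordIso"
      unfolding K_def using card_of_Field_ordIso kCard u1 by blast
    have "(natLeq, card_of K) \<in> ordLeq"
      using kinf u1 ordLeq_ordIso_trans[OF _ ordIso_symmetric[OF KI]] by blast
    then have Kinf: "infinite K"
      using infinite_iff_natLeq_ordLeq by blast
    have tle: "(card_of (A t s), card_of K) \<in> ordLeq" if t: "t \<in> {1..<u}" and s: "s \<in> S t" for t s
    proof -
      have t1: "t \<in> {1..n}" using t u by auto
      have "(\<kappa> t, \<kappa> (u-1)) \<in> ordLeq"
      proof (cases "t = u - 1")
        case True
        have "Card_order (\<kappa> (u-1))" using kCard u1 by blast
        then show ?thesis unfolding True by (intro ordLeq_reflexive card_order_on_well_order_on)
      next
        case False
        then have "t < u - 1" using t by auto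
        then show ?thesis using kmono t1 u1 ordLess_imp_ordLeq by blast
      qed
      then have "(\<kappa> t, card_of K) \<in> ordLeq"
        using KI ordLeq_ordIso_trans ordIso_symmetric by blast
      then show ?thesis using Acard t1 s ordIso_ordLeq_trans by blast
    qed
    have fin_le: "(card_of X, card_of K) \<in> ordLeq" if "finite X" for X :: "'z set"
      using that Kinf finite_ordLess_infinite2 ordLess_imp_ordLeq by blast
    have CK: "(card_of (C u), card_of K) \<in> ordLeq"
      unfolding C_def
    proof (rule card_of_UNION_ordLeq_infinite[OF Kinf])
      show "(card_of {1..<u}, card_of K) \<in> ordLeq" by (rule fin_le) simp
      show "\<forall>t\<in>{1..<u}. (card_of (\<Union>s\<in>S t. \<Union>a\<in>A t s. supp a), card_of K) \<in> ordLeq"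
      proof
        fix t assume t: "t \<in> {1..<u}"
        show "(card_of (\<Union>s\<in>S t. \<Union>a\<in>A t s. supp a), card_of K) \<in> ordLeq"
        proof (rule card_of_UNION_ordLeq_infinite[OF Kinf])
          have "finite (S t)" using Sfin t u by auto
          then show "(card_of (S t), card_of K) \<in> ordLeq" by (rule fin_le)
          show "\<forall>s\<in>S t. (card_of (\<Union>a\<in>A t s. supp a), card_of K) \<in> ordLeq"
          proof
            fix s assume s: "s \<in> S t"
            show "(card_of (\<Union>a\<in>A t s. supp a), card_of K) \<in> ordLeq"
              using card_of_UNION_ordLeq_infinite[OF Kinf tle[OF t s]] fin_le finite_supp by blast
          qed
        qed
      qed
    qed
    have un: "u \<in> {1..n}" using u by auto
    have "(\<kappa> (u-1), \<kappa> u) \<in> ordLess" using kmono u1 un u by auto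
    then have "(card_of K, \<kappa> u) \<in> ordLess"
      using ordIso_ordLess_trans[OF KI] by blast
    moreover have "(\<kappa> u, card_of (A u r)) \<in> ordIso"
      using Acard un r ordIso_symmetric by blast
    ultimately have "(card_of K, card_of (A u r)) \<in> ordLess"
      using ordLess_ordIso_trans by blast
    then show ?thesis using fiber_exists[OF Kinf CK] by blast
  qed
  define F where "F u r = (SOME F. finite F \<and> infinite {a\<in>A u r. supp a \<inter> C u = F})" for u r
  have F: "finite (F u r) \<and> infinite {a\<in>A u r. supp a \<inter> C u = F u r}"
    if "u \<in> {2..n}" "r \<in> S u" for u r
    unfolding F_def using someI_ex[OF fib[OF that]] .
  define ib where "ib = d \<union> (\<Union>u\<in>{2..n}. \<Union>r\<in>S u. F u r)"
  have ibfin: "finite ib" unfolding ib_def using d F Sfin by auto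
  have claim: "m \<le> n \<Longrightarrow> \<exists>i. finite i \<and> ib \<subseteq> i \<and>
      (\<forall>t\<in>{1..m}. \<forall>u\<in>{1..m}. t < u \<longrightarrow>
        (\<forall>s\<in>S t. \<forall>r\<in>S u. card (restr (A t s) i) < card (restr (A u r) i)))" for m
  proof (induction m)
    case 0
    then show ?case using ibfin by auto
  next
    case (Suc m)
    then obtain i where i: "finite i" "ib \<subseteq> i" and
      IH: "\<forall>t\<in>{1..m}. \<forall>u\<in>{1..m}. t < u \<longrightarrow>
        (\<forall>s\<in>S t. \<forall>r\<in>S u. card (restr (A t s) i) < card (restr (A u r) i))" by auto
    show ?case
    proof (cases "m = 0")
      case True
      then show ?thesis using i by auto
    next
      case False
      have m1: "Suc m \<in> {2..n}" using False Suc by auto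
      define M where "M = card (\<Union>t\<in>{1..m}. \<Union>s\<in>S t. restr (A t s) i)"
      have rfin: "finite (restr (A t s) i)" if "t \<in> {1..n}" "s \<in> S t" for t s
        using finite_restr AW that i by blast
      have Ufin: "finite (\<Union>t\<in>{1..m}. \<Union>s\<in>S t. restr (A t s) i)"
        using rfin Sfin Suc by auto
      have leM: "card (restr (A t s) i) \<le> M" if "t \<in> {1..m}" "s \<in> S t" for t s
        unfolding M_def using that by (intro card_mono[OF Ufin]) auto
      have Gex: "\<exists>G. finite G \<and> card G = Suc M \<and> G \<subseteq> {a\<in>A (Suc m) r. supp a \<inter> C (Suc m) = F (Suc m) r}"
        if "r \<in> S (Suc m)" for r
        using infinite_arbitrarily_large F[OF m1 that] by blast
      define G where "G r = (SOME G. finite G \<and> card G = Suc M \<and> G \<subseteq> {a\<in>A (Suc m) r. supp a \<inter> C (Suc m) = F (Suc m) r})" for r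
      have G: "finite (G r) \<and> card (G r) = Suc M \<and>
           G r \<subseteq> {a\<in>A (Suc m) r. supp a \<inter> C (Suc m) = F (Suc m) r}" if "r \<in> S (Suc m)" for r
        unfolding G_def using someI_ex[OF Gex[OF that]] .
      define i' where "i' = i \<union> (\<Union>r\<in>S (Suc m). \<Union>a\<in>G r. supp a)"
      have i'fin: "finite i'" unfolding i'_def using i G Sfin m1 finite_supp by auto
      have same: "restr (A t s) i' = restr (A t s) i" if t: "t \<in> {1..m}" and s: "s \<in> S t" for t s
      proof
        show "restr (A t s) i \<subseteq> restr (A t s) i'" unfolding restr_def i'_def by auto
        show "restr (A t s) i' \<subseteq> restr (A t s) i"
        proof
          fix a assume a: "a \<in> restr (A t s) i'"
          have "supp a \<subseteq> i"
          proof
            fix x assume x: "x \<in> supp a"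
            have aA: "a \<in> A t s" using a by (simp add: restr_def)
            have "t \<in> {1..<Suc m}" using t by auto
            then have xC: "x \<in> C (Suc m)" unfolding C_def using aA s x by blast
            from a x have "x \<in> i'" by (auto simp: restr_def)
            then show "x \<in> i"
            proof (cases "x \<in> i")
              case False
              with \<open>x \<in> i'\<close> obtain r b where r: "r \<in> S (Suc m)" and b: "b \<in> G r" and xb: "x \<in> supp b"
                unfolding i'_def by auto
              have "x \<in> F (Suc m) r" using G[OF r] b xb xC by auto
              then have "x \<in> ib" using r m1 unfolding ib_def by blast
              then show ?thesis using i(2) by blast
            qed
          qed
          then show "a \<in> restr (A t s) i" using a by (auto simp: restr_def)
        qed
      qed
      have big: "Suc M \<le> card (restr (A (Suc m) r) i')" if r: "r \<in> S (Suc m)" for r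
      proof -
        have "G r \<subseteq> restr (A (Suc m) r) i'"
          using G[OF r] r unfolding restr_def i'_def by auto
        moreover have "finite (restr (A (Suc m) r) i')"
        proof -
          have "Suc m \<in> {1..n}" using m1 by auto
          then have "finitary (A (Suc m) r)" using AW r by blast
          then show ?thesis using finite_restr i'fin by blast
        qed
        ultimately show ?thesis using G[OF r] card_mono by (metis (no_types))
      qed
      have i'ib: "ib \<subseteq> i'" using i unfolding i'_def by auto
      show ?thesis
      proof (intro exI[of _ i'] conjI i'fin i'ib ballI impI)
        fix t u s r assume t: "t \<in> {1..Suc m}" and u: "u \<in> {1..Suc m}" and tu: "t < u"
          and s: "s \<in> S t" and r: "r \<in> S u"
        have t': "t \<in> {1..m}" using t u tu by auto
        show "card (restr (A t s) i') < card (restr (A u r) i')"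
        proof (cases "u = Suc m")
          case True
          then show ?thesis using big[of r] r leM[OF t' s] same[OF t' s] by auto
        next
          case False
          then have u': "u \<in> {1..m}" using u by auto
          then show ?thesis using IH t' u' tu s r same by auto
        qed
      qed
    qed
  qed
  from claim[of n] obtain i where i: "finite i" "ib \<subseteq> i" and
    H: "\<forall>t\<in>{1..n}. \<forall>u\<in>{1..n}. t < u \<longrightarrow>
        (\<forall>s\<in>S t. \<forall>r\<in>S u. card (restr (A t s) i) < card (restr (A u r) i))" by auto
  show ?thesis
  proof (intro exI[of _ i] conjI i(1) ballI impI)
    show "d \<subseteq> i" using i(2) unfolding ib_def by auto
    fix t u s r assume t: "t \<in> {1..n}" and u: "u \<in> {1..n}" and tu: "t < u"
      and s: "s \<in> S t" and r: "r \<in> S u"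
    have "finitary (A t s)" "finitary (A u r)" using AW t u s r by blast+
    then have f1: "finite (restr (A t s) i)" and f2: "finite (restr (A u r) i)"
      using finite_restr i(1) by blast+
    have "card (restr (A t s) i) < card (restr (A u r) i)" using H t u tu s r by blast
    then show "(card_of (restr (A t s) i), card_of (restr (A u r) i)) \<in> ordLess"
      using finite_card_of_iff_card3[OF f1 f2] by simp
  qed
qed

end
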